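(* Let $\mathbf A\in\mathbb C^{m\times n}$ with $m\ge n$, and let $\mathbf A=\mathbf Q\mathbf R$ be its (thin) QR decomposition, partitioned as $[\mathbf A_1\ \mathbf A_2]=[\mathbf Q_1\ \mathbf Q_2]\begin{bmatrix}\mathbf R_{11}&\mathbf R_{12}\\ \mathbf 0&\mathbf R_{22}\end{bmatrix}$ with $\mathbf A_1\in\mathbb C^{m\times(n-k)}$ and $\mathbf R_{22}\in\mathbb C^{k\times k}$. If $\sigma_i(\mathbf A)<\sigma_1(\mathbf A_1)$ for $i=1,\dots,k$, then for $i=1,\dots,k$, $$\sigma_i(\mathbf R_{22})\le\Big[\frac{\sigma_n(\mathbf A)}{\sigma_1(\mathbf A_1)}+1\Big]\sigma_i(\mathbf A).$$
   Context: For a matrix $\mathbf B\in\mathbb C^{p\times q}$ with $p\ge q$, $\sigma_1(\mathbf B)\le\dots\le\sigma_q(\mathbf B)$ denote its singular values in increasing order; thus $\sigma_1(\mathbf A_1)$ is the smallest singular value of $\mathbf A_1$ and $\sigma_n(\mathbf A)$ the largest of $\mathbf A$. *)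

theory Defs
  imports "Jordan_Normal_Form.Schur_Decomposition"
          "HOL-Computational_Algebra.Fundamental_Theorem_Algebra"
begin

definition sing_vals :: "complex mat \<Rightarrow> real list" where
  "sing_vals B = sorted_list_of_multiset
     (image_mset (\<lambda>z. sqrt (Re z)) (proots (char_poly (mat_adjoint B * B))))"

text \<open>sigma i B, 1-indexed: sigma 1 B is the smallest singular value.\<close>
definition sigma :: "nat \<Rightarrow> complex mat \<Rightarrow> real" where
  "sigma i B = sing_vals B ! (i - 1)"

definition submat :: "'a mat \<Rightarrow> nat \<Rightarrow> nat \<Rightarrow> nat \<Rightarrow> nat \<Rightarrow> 'a mat" where
  "submat M r0 c0 p q = mat p q (\<lambda>(i, j). M $$ (r0 + i, c0 + j))"

end

theory Submission
  imports Defs "HOL-Analysis.L2_Norm"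
begin


lemma adj_carrier[simp]: "A \<in> carrier_mat m n \<Longrightarrow> mat_adjoint A \<in> carrier_mat n m"
  unfolding mat_adjoint_def by (auto simp: mat_of_rows_def)

lemma adj_dims[simp]: "dim_row (mat_adjoint A) = dim_col A" "dim_col (mat_adjoint A) = dim_row A"
  unfolding mat_adjoint_def by (auto simp: mat_of_rows_def)

lemma adj_index[simp]: "i < dim_col A \<Longrightarrow> j < dim_row A \<Longrightarrow>
   mat_adjoint A $$ (i,j) = conjugate (A $$ (j,i))"
  unfolding mat_adjoint_def by (auto simp: mat_of_rows_def)

lemma adj_adj[simp]: "mat_adjoint (mat_adjoint (A::complex mat)) = A"
  by (rule eq_matI, auto)

lemma adj_mult: assumes A: "(A::complex mat) \<in> carrier_mat m n" and B: "B \<in> carrier_mat n p"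
  shows "mat_adjoint (A * B) = mat_adjoint B * mat_adjoint A"
proof (rule eq_matI)
  fix i j assume i: "i < dim_row (mat_adjoint B * mat_adjoint A)" and j: "j < dim_col (mat_adjoint B * mat_adjoint A)"
  then have i': "i < p" and j': "j < m" using A B by auto
  have "mat_adjoint (A * B) $$ (i, j) = conjugate (\<Sum>t<n. A $$ (j,t) * B $$ (t,i))"
    using A B i' j' by (auto simp: scalar_prod_def atLeast0LessThan intro!: sum.cong)
  also have "\<dots> = (\<Sum>t<n. conjugate (B $$ (t,i)) * conjugate (A $$ (j,t)))"
    by (simp add: sum_conjugate mult.commute)
  also have "\<dots> = (mat_adjoint B * mat_adjoint A) $$ (i,j)"
    using A B i' j' by (auto simp: scalar_prod_def atLeast0LessThan intro!: sum.cong)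
  finally show "mat_adjoint (A * B) $$ (i, j) = (mat_adjoint B * mat_adjoint A) $$ (i, j)" .
qed (use A B in auto)



definition sqn :: "complex vec \<Rightarrow> real" where
  "sqn v = (\<Sum>i<dim_vec v. (cmod (v$i))^2)"

lemma sqn_nonneg[simp]: "0 \<le> sqn v" unfolding sqn_def by (auto intro: sum_nonneg)

lemma cself: "v \<bullet>c v = complex_of_real (sqn v)"
proof -
  have "\<And>z. z * cnj z = complex_of_real ((cmod z)^2)" by (metis complex_norm_square of_real_power)
  then show ?thesis unfolding scalar_prod_def sqn_def by (simp add: atLeast0LessThan)
qed

lemma adj_vec: assumes A: "(A::complex mat) \<in> carrier_mat m n" and x: "x \<in> carrier_vec n"
  and y: "y \<in> carrier_vec m"
  shows "(A *\<^sub>v x) \<bullet>c y = x \<bullet>c (mat_adjoint A *\<^sub>v y)"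
proof -
  have "(A *\<^sub>v x) \<bullet>c y = (\<Sum>i<m. (\<Sum>j<n. A $$ (i,j) * x $ j) * cnj (y $ i))"
    using A x y by (simp add: scalar_prod_def atLeast0LessThan)
  also have "\<dots> = (\<Sum>i<m. \<Sum>j<n. x $ j * (A $$ (i,j) * cnj (y $ i)))"
    by (simp add: sum_distrib_right sum_distrib_left mult_ac)
  also have "\<dots> = (\<Sum>j<n. \<Sum>i<m. x $ j * (A $$ (i,j) * cnj (y $ i)))"
    by (rule sum.swap)
  also have "\<dots> = (\<Sum>j<n. x $ j * cnj (\<Sum>i<m. cnj (A $$ (i,j)) * y $ i))"
    by (simp add: sum_distrib_left)
  also have "\<dots> = x \<bullet>c (mat_adjoint A *\<^sub>v y)"
    using A x y by (simp add: scalar_prod_def atLeast0LessThan)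
  finally show ?thesis .
qed

lemma sqn_mult: assumes A: "(A::complex mat) \<in> carrier_mat m n" and x: "x \<in> carrier_vec n"
  shows "complex_of_real (sqn (A *\<^sub>v x)) = x \<bullet>c ((mat_adjoint A * A) *\<^sub>v x)"
proof -
  have "complex_of_real (sqn (A *\<^sub>v x)) = (A *\<^sub>v x) \<bullet>c (A *\<^sub>v x)" by (simp add: cself)
  also have "\<dots> = x \<bullet>c (mat_adjoint A *\<^sub>v (A *\<^sub>v x))"
    using adj_vec[OF A x mult_mat_vec_carrier[OF A x]] .
  also have "mat_adjoint A *\<^sub>v (A *\<^sub>v x) = (mat_adjoint A * A) *\<^sub>v x"
    using A x by (simp add: assoc_mult_mat_vec[symmetric, of _ n m _ n])
  finally show ?thesis .
qed

lemma sqn_unitary: assumes U: "(U::complex mat) \<in> carrier_mat m n"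
  and UU: "mat_adjoint U * U = 1\<^sub>m n" and x: "x \<in> carrier_vec n"
  shows "sqn (U *\<^sub>v x) = sqn x"
proof -
  have "complex_of_real (sqn (U *\<^sub>v x)) = complex_of_real (sqn x)"
    using sqn_mult[OF U x] UU x by (simp add: cself)
  then show ?thesis by simp
qed

definition dmat :: "complex list \<Rightarrow> complex mat" where
  "dmat es = mat (length es) (length es) (\<lambda>(i,j). if i = j then es ! i else 0)"

lemma proots_lin: "proots (\<Prod>e\<leftarrow>es. [:-e, 1:]) = mset (es :: complex list)"
proof (induction es)
  case (Cons a es)
  have "(\<Prod>e\<leftarrow>es. [:-e, 1:]) \<noteq> 0" by (auto simp: prod_list_zero_iff)
  then have "proots ([:-a,1:] * (\<Prod>e\<leftarrow>es. [:-e, 1:])) = proots [:-a,1:] + proots (\<Prod>e\<leftarrow>es. [:-e, 1:])"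
    by (intro proots_mult) auto
  moreover have "proots [:-a,1:] = {#a#}" using proots_linear_factor[of "-a"] by simp
  ultimately show ?case using Cons by simp
qed simp



definition nz :: "complex vec \<Rightarrow> complex vec" where
  "nz w = complex_of_real (1 / sqrt (sqn w)) \<cdot>\<^sub>v w"

lemma cinner_smult: "dim_vec a = dim_vec b \<Longrightarrow>
  (complex_of_real c \<cdot>\<^sub>v a) \<bullet>c (complex_of_real d \<cdot>\<^sub>v b) = complex_of_real (c * d) * (a \<bullet>c b)"
  unfolding scalar_prod_def by (simp add: sum_distrib_left mult_ac)

lemma sqn_pos: "v \<in> carrier_vec n \<Longrightarrow> v \<noteq> 0\<^sub>v n \<Longrightarrow> 0 < sqn v"
proof (rule ccontr)
  assume v: "v \<in> carrier_vec n" and v0: "v \<noteq> 0\<^sub>v n" and "\<not> 0 < sqn v"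
  then have "sqn v = 0" using sqn_nonneg[of v] by linarith
  then have "\<forall>i\<in>{..<dim_vec v}. (cmod (v$i))^2 = 0"
    unfolding sqn_def by (subst sum_nonneg_eq_0_iff[symmetric]) auto
  then have "v = 0\<^sub>v n" using v by (intro eq_vecI) auto
  with v0 show False by simp
qed

lemma mat_adj_mult_index: assumes W: "(W::complex mat) \<in> carrier_mat m n" and i: "i < n" and j: "j < n"
  shows "(mat_adjoint W * W) $$ (i,j) = col W j \<bullet>c col W i"
  using W i j by (simp add: scalar_prod_def mult.commute)

lemma sq_mult: "A \<in> carrier_mat n n \<Longrightarrow> B \<in> carrier_mat n n \<Longrightarrow> A * B \<in> carrier_mat n n" by simp

lemma dmat_carrier[simp]: "dmat es \<in> carrier_mat (length es) (length es)"
  unfolding dmat_def by auto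

theorem spectral:
  fixes H :: "complex mat"
  shows "H \<in> carrier_mat n n \<Longrightarrow> mat_adjoint H = H \<Longrightarrow>
   \<exists>U es. U \<in> carrier_mat n n \<and> mat_adjoint U * U = 1\<^sub>m n \<and> length es = n \<and>
     mat_adjoint U * H * U = dmat es \<and> char_poly H = (\<Prod>e\<leftarrow>es. [:-e,1:]) \<and> sorted (map Re es)"
proof (induction n arbitrary: H)
  case 0
  obtain as where "char_poly H = (\<Prod>a\<leftarrow>as. [:- a, 1:])" "length as = 0"
    using char_poly_factorized[OF 0(1)] by auto
  then have cp: "char_poly H = (\<Prod>e\<leftarrow>[]. [:-e,1:])" by simp
  show ?case
    by (rule exI[of _ "1\<^sub>m 0"], rule exI[of _ "[]"], insert 0 cp, auto intro!: eq_matI simp: dmat_def)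
next
  case (Suc n)
  note H = Suc.prems(1) and herm = Suc.prems(2)
  let ?N = "Suc n"
  obtain as where cp_eq: "char_poly H = (\<Prod>a\<leftarrow>as. [:- a, 1:])" and las: "length as = ?N"
    using char_poly_factorized[OF H] by auto
  have as0: "as \<noteq> []" using las by auto
  define e where "e = arg_min_list Re as"
  have e_in: "e \<in> set as" unfolding e_def using arg_min_list_in[OF as0] .
  have e_min: "\<And>a. a \<in> set as \<Longrightarrow> Re e \<le> Re a"
    unfolding e_def using f_arg_min_list_f[OF as0, of Re] by (simp add: Min_le)
  have "poly (char_poly H) e = 0" unfolding cp_eq using e_in
    by (simp add: poly_prod_list prod_list_zero_iff o_def)
  then have ev: "eigenvalue H e" using eigenvalue_root_char_poly[OF H] by simp
  define v where "v = find_eigenvector H e"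
  from find_eigenvector[OF H ev] have "eigenvector H v e" unfolding v_def .
  then have v: "v \<in> carrier_vec ?N" and v0: "v \<noteq> 0\<^sub>v ?N" and Hv: "H *\<^sub>v v = e \<cdot>\<^sub>v v"
    using H unfolding eigenvector_def by auto
  interpret cof_vec_space ?N "TYPE(complex)" .
  define b where "b = basis_completion v"
  from basis_completion[OF v v0, folded b_def]
  have span_b: "span (set b) = carrier_vec ?N" and dist_b: "distinct b" 
    and indep: "\<not> lin_dep (set b)" and b: "set b \<subseteq> carrier_vec ?N" 
    unfolding basis_def by auto
  have hdb: "hd b = v" unfolding b_def basis_completion_def Let_def by simp
  have len_b: "length b = ?N"
    using b dist_b indep span_b dim_is_n
    by (metis basis_def dim_basis distinct_card finite_set)
  from hdb len_b obtain vs where bv: "b = v # vs" by (cases b, auto)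
  define ws where "ws = gram_schmidt ?N b"
  from gram_schmidt_result[OF b dist_b indep ws_def]
  have ws: "set ws \<subseteq> carrier_vec ?N" "corthogonal ws" "length ws = ?N" 
    by (auto simp: len_b)
  from gram_schmidt_hd[OF v, of vs, folded bv] have hdws: "hd ws = v" unfolding ws_def .
  have ws0: "ws ! 0 = v" using hdws ws(3) by (cases ws) auto
  define us where "us = map nz ws"
  have lus: "length us = ?N" unfolding us_def using ws by simp
  have us_car: "\<And>i. i < ?N \<Longrightarrow> us ! i \<in> carrier_vec ?N"
    unfolding us_def nz_def using ws by auto
  have ws_car: "\<And>i. i < ?N \<Longrightarrow> ws ! i \<in> carrier_vec ?N" using ws by auto
  have us_orth: "\<And>i j. i < ?N \<Longrightarrow> j < ?N \<Longrightarrow> us ! j \<bullet>c us ! i = (if i = j then 1 else 0)"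
  proof -
    fix i j assume i: "i < ?N" and j: "j < ?N"
    have ne: "\<And>t. t < ?N \<Longrightarrow> ws ! t \<noteq> 0\<^sub>v ?N"
    proof
      fix t assume t: "t < ?N" and "ws ! t = 0\<^sub>v ?N"
      then have "ws ! t \<bullet>c ws ! t = 0" by simp
      with corthogonalD[OF ws(2), of t t] t ws(3) show False by auto
    qed
    have pos: "\<And>t. t < ?N \<Longrightarrow> 0 < sqn (ws ! t)" using ne ws_car sqn_pos by blast
    have "us ! j \<bullet>c us ! i = complex_of_real (1 / sqrt (sqn (ws!j)) * (1 / sqrt (sqn (ws!i)))) * (ws!j \<bullet>c ws!i)"
    proof -
      have "us!j = nz (ws!j)" "us!i = nz (ws!i)" using i j ws(3) by (simp_all add: us_def)
      then show ?thesis unfolding nz_def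
        by (simp only:) (rule cinner_smult, insert ws_car[OF i] ws_car[OF j], auto)
    qed
    also have "\<dots> = (if i = j then 1 else 0)"
    proof (cases "i = j")
      case True
      then show ?thesis using pos[OF i] by (simp add: cself)
    next
      case False
      then show ?thesis using corthogonalD[OF ws(2), of j i] i j ws(3) by auto
    qed
    finally show "us ! j \<bullet>c us ! i = (if i = j then 1 else 0)" .
  qed
  define W where "W = mat_of_cols ?N us"
  have W: "W \<in> carrier_mat ?N ?N" unfolding W_def using lus mat_of_cols_carrier(1)[of ?N us] by simp
  have colW: "\<And>j. j < ?N \<Longrightarrow> col W j = us ! j" unfolding W_def using lus us_car by simp
  have WW: "mat_adjoint W * W = 1\<^sub>m ?N"
  proof (rule eq_matI)
    fix i j assume "i < dim_row (1\<^sub>m ?N)" "j < dim_col (1\<^sub>m ?N)"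
    then have i: "i < ?N" and j: "j < ?N" by auto
    have "(mat_adjoint W * W) $$ (i,j) = col W j \<bullet>c col W i" by (rule mat_adj_mult_index[OF W i j])
    then show "(mat_adjoint W * W) $$ (i,j) = 1\<^sub>m ?N $$ (i,j)"
      using colW[OF i] colW[OF j] us_orth[OF i j] i j by simp
  qed (insert W, auto)
  have WW': "W * mat_adjoint W = 1\<^sub>m ?N"
    using mat_mult_left_right_inverse[OF adj_carrier[OF W] W WW] .
  have us0: "us ! 0 = nz v" unfolding us_def using ws0 ws(3) by simp
  have Hnv: "H *\<^sub>v (nz v) = e \<cdot>\<^sub>v nz v"
    unfolding nz_def using H v Hv by (simp add: mult_mat_vec smult_smult_assoc mult.commute)
  have nzv: "nz v \<in> carrier_vec ?N" using v by (simp add: nz_def)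
  define A' where "A' = mat_adjoint W * H * W"
  have A': "A' \<in> carrier_mat ?N ?N" unfolding A'_def using W H by auto
  have hermA': "mat_adjoint A' = A'"
    unfolding A'_def using W H herm
    by (simp add: adj_mult[of _ ?N ?N _ ?N] assoc_mult_mat[of _ ?N ?N _ ?N _ ?N])
  have colA': "col A' 0 = e \<cdot>\<^sub>v unit_vec ?N 0"
  proof -
    have "col A' 0 = (mat_adjoint W * H) *\<^sub>v col W 0" unfolding A'_def using W H
      by (subst col_mult2[of _ ?N ?N], auto)
    also have "\<dots> = mat_adjoint W *\<^sub>v (H *\<^sub>v nz v)" using colW[of 0] us0 assoc_mult_mat_vec[OF adj_carrier[OF W] H nzv]
      by simp
    also have "\<dots> = e \<cdot>\<^sub>v (mat_adjoint W *\<^sub>v col W 0)" using Hnv colW[of 0] us0 mult_mat_vec[OF adj_carrier[OF W] nzv]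
      by simp
    also have "mat_adjoint W *\<^sub>v col W 0 = col (mat_adjoint W * W) 0" using W
      by (subst col_mult2[of _ ?N ?N], auto)
    also have "\<dots> = unit_vec ?N 0" using WW by simp
    finally show ?thesis .
  qed
  have A'c0: "\<And>i. i < ?N \<Longrightarrow> A' $$ (i,0) = (if i = 0 then e else 0)"
  proof -
    fix i assume i: "i < ?N"
    have "A' $$ (i,0) = col A' 0 $ i" using A' i by simp
    then show "A' $$ (i,0) = (if i = 0 then e else 0)" using i colA' by simp
  qed
  have A'r0: "\<And>j. j < ?N \<Longrightarrow> A' $$ (0,j) = cnj (A' $$ (j,0))"
  proof -
    fix j assume j: "j < ?N"
    have "A' $$ (0,j) = mat_adjoint A' $$ (0,j)" using hermA' by simp
    then show "A' $$ (0,j) = cnj (A' $$ (j,0))" using A' j by simp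
  qed
  have e_real: "cnj e = e" using A'r0[of 0] A'c0[of 0] by simp
  define A3 where "A3 = mat n n (\<lambda>(i,j). A' $$ (Suc i, Suc j))"
  have A3: "A3 \<in> carrier_mat n n" unfolding A3_def by simp
  have hermA3: "mat_adjoint A3 = A3"
  proof (rule eq_matI)
    fix i j assume "i < dim_row A3" "j < dim_col A3"
    then have i: "i < n" and j: "j < n" using A3 by auto
    have "A' $$ (Suc i, Suc j) = mat_adjoint A' $$ (Suc i, Suc j)" using hermA' by simp
    then show "mat_adjoint A3 $$ (i, j) = A3 $$ (i, j)" using i j A' unfolding A3_def by simp
  qed (insert A3, auto)
  define E1 where "E1 = mat 1 1 (\<lambda>_. e)"
  have blockA': "A' = four_block_mat E1 (0\<^sub>m 1 n) (0\<^sub>m n 1) A3"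
  proof (rule eq_matI)
    fix i j assume "i < dim_row (four_block_mat E1 (0\<^sub>m 1 n) (0\<^sub>m n 1) A3)"
      "j < dim_col (four_block_mat E1 (0\<^sub>m 1 n) (0\<^sub>m n 1) A3)"
    then have i: "i < ?N" and j: "j < ?N" by (auto simp: E1_def A3_def)
    show "A' $$ (i, j) = four_block_mat E1 (0\<^sub>m 1 n) (0\<^sub>m n 1) A3 $$ (i, j)"
    proof (cases "i = 0")
      case True
      then show ?thesis using A'r0[OF j] A'c0[OF j] A'c0[of 0] e_real i j
        by (cases j) (auto simp: E1_def A3_def)
    next
      case False
      then show ?thesis using A'c0[OF i] i j
        by (cases j) (auto simp: E1_def A3_def)
    qed
  qed (insert A', auto simp: E1_def A3_def)
  have "similar_mat_wit H A' W (mat_adjoint W)"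
    unfolding similar_mat_wit_def Let_def
  proof (intro conjI)
    have "W * A' * mat_adjoint W = (W * mat_adjoint W) * H * (W * mat_adjoint W)"
      unfolding A'_def using W H adj_carrier[OF W] by (simp add: assoc_mult_mat[of _ ?N ?N _ ?N _ ?N] sq_mult)
    then show "H = W * A' * mat_adjoint W" using WW' H by simp
  qed (insert W H A' WW WW', auto)
  then have "similar_mat H A'" unfolding similar_mat_def by blast
  from char_poly_similar[OF this]
  have "char_poly H = char_poly A'" .
  also have "\<dots> = char_poly E1 * char_poly A3"
    unfolding blockA' by (rule char_poly_four_block_zeros_col) (auto simp: E1_def A3_def)
  also have "char_poly E1 = [:-e, 1:]"
    by (simp add: E1_def char_poly_defs det_def sign_def)
  finally have cpH: "char_poly H = [:-e, 1:] * char_poly A3" .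
  from Suc.IH[OF A3 hermA3] obtain U3 es3 where U3: "U3 \<in> carrier_mat n n"
    and UU3: "mat_adjoint U3 * U3 = 1\<^sub>m n" and les3: "length es3 = n"
    and D3: "mat_adjoint U3 * A3 * U3 = dmat es3"
    and cp3: "char_poly A3 = (\<Prod>e\<leftarrow>es3. [:-e,1:])" and s3: "sorted (map Re es3)" by blast
  have es3_ge: "\<And>x. x \<in> set es3 \<Longrightarrow> Re e \<le> Re x"
  proof -
    fix x assume x: "x \<in> set es3"
    have "poly (char_poly H) x = 0" unfolding cpH cp3 using x
      by (simp add: poly_prod_list prod_list_zero_iff o_def)
    then have "x \<in> set as" unfolding cp_eq by (auto simp: poly_prod_list prod_list_zero_iff o_def)
    then show "Re e \<le> Re x" by (rule e_min)
  qed
  define Bk where "Bk = four_block_mat (1\<^sub>m 1) (0\<^sub>m 1 n) (0\<^sub>m n 1) U3"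
  have Bk: "Bk \<in> carrier_mat ?N ?N" unfolding Bk_def using U3 by auto
  have adjBk: "mat_adjoint Bk = four_block_mat (1\<^sub>m 1) (0\<^sub>m 1 n) (0\<^sub>m n 1) (mat_adjoint U3)"
    by (rule eq_matI, insert U3, auto simp: Bk_def)
  define U where "U = W * Bk"
  have U: "U \<in> carrier_mat ?N ?N" unfolding U_def using W Bk by auto
  have adjU: "mat_adjoint U = mat_adjoint Bk * mat_adjoint W" unfolding U_def using adj_mult[OF W Bk] .
  have "mat_adjoint U * U = mat_adjoint Bk * (mat_adjoint W * W) * Bk"
    unfolding adjU U_def using W Bk adj_carrier[OF W] adj_carrier[OF Bk] by (simp add: assoc_mult_mat[of _ ?N ?N _ ?N _ ?N] sq_mult adj_mult[OF W Bk])
  also have "\<dots> = mat_adjoint Bk * Bk" using WW Bk by simp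
  also have "\<dots> = 1\<^sub>m ?N" unfolding adjBk unfolding Bk_def using U3 UU3
    by (subst mult_four_block_mat[OF one_carrier_mat zero_carrier_mat zero_carrier_mat adj_carrier[OF U3]
          one_carrier_mat zero_carrier_mat zero_carrier_mat U3], auto)
  finally have UU: "mat_adjoint U * U = 1\<^sub>m ?N" .
  have E1: "E1 \<in> carrier_mat 1 1" by (simp add: E1_def)
  have "mat_adjoint U * H * U = mat_adjoint Bk * A' * Bk"
    unfolding adjU U_def A'_def using W Bk H adj_carrier[OF W] adj_carrier[OF Bk] by (simp add: assoc_mult_mat[of _ ?N ?N _ ?N _ ?N] sq_mult adj_mult[OF W Bk])
  also have "mat_adjoint Bk * A' = four_block_mat E1 (0\<^sub>m 1 n) (0\<^sub>m n 1) (mat_adjoint U3 * A3)"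
    unfolding adjBk blockA' using U3 A3 E1
    by (subst mult_four_block_mat[OF one_carrier_mat zero_carrier_mat zero_carrier_mat adj_carrier[OF U3]
          E1 zero_carrier_mat zero_carrier_mat A3], auto)
  also have "\<dots> * Bk = four_block_mat E1 (0\<^sub>m 1 n) (0\<^sub>m n 1) (mat_adjoint U3 * A3 * U3)"
    unfolding Bk_def using U3 A3 E1
    by (subst mult_four_block_mat[OF E1 zero_carrier_mat zero_carrier_mat mult_carrier_mat[OF adj_carrier[OF U3] A3]
          one_carrier_mat zero_carrier_mat zero_carrier_mat U3], auto)
  also have "\<dots> = dmat (e # es3)"
    unfolding D3 by (rule eq_matI, auto simp: dmat_def E1_def les3)
  finally have D: "mat_adjoint U * H * U = dmat (e # es3)" .
  show ?case
    by (rule exI[of _ U], rule exI[of _ "e # es3"], insert U UU D cpH cp3 les3 s3 es3_ge, auto)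
qed



lemma dmat_mult_vec: assumes y: "y \<in> carrier_vec (length es)"
  shows "y \<bullet>c (dmat es *\<^sub>v y) = (\<Sum>j<length es. cnj (es!j) * y$j * cnj (y$j))"
proof -
  have "dmat es *\<^sub>v y = vec (length es) (\<lambda>j. es!j * y$j)"
  proof (rule eq_vecI)
    fix j assume j: "j < dim_vec (vec (length es) (\<lambda>j. es!j * y$j))"
    then have j: "j < length es" by simp
    have "(dmat es *\<^sub>v y) $ j = (\<Sum>t<length es. (if j = t then es!j else 0) * y$t)"
      using j y by (simp add: dmat_def scalar_prod_def atLeast0LessThan)
    also have "\<dots> = (\<Sum>t<length es. if j = t then es!j * y$t else 0)" by (rule sum.cong) auto
    also have "\<dots> = es!j * y$j" using j by simp
    finally show "(dmat es *\<^sub>v y) $ j = vec (length es) (\<lambda>j. es ! j * y $ j) $ j" using j by simp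
  qed (simp add: dmat_def)
  then show ?thesis using y by (simp add: scalar_prod_def atLeast0LessThan mult_ac)
qed

theorem svpkg: assumes B: "(B::complex mat) \<in> carrier_mat p q"
  shows "\<exists>U lam. U \<in> carrier_mat q q \<and> mat_adjoint U * U = 1\<^sub>m q \<and> U * mat_adjoint U = 1\<^sub>m q \<and>
    length lam = q \<and> sorted lam \<and> (\<forall>j<q. 0 \<le> lam!j) \<and> sing_vals B = map sqrt lam \<and>
    (\<forall>y\<in>carrier_vec q. sqn (B *\<^sub>v (U *\<^sub>v y)) = (\<Sum>j<q. lam!j * (cmod (y$j))^2))"
proof -
  let ?H = "mat_adjoint B * B"
  have H: "?H \<in> carrier_mat q q" using B by auto
  have herm: "mat_adjoint ?H = ?H" using adj_mult[OF adj_carrier[OF B] B] by simp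
  obtain U es where U: "U \<in> carrier_mat q q" and UU: "mat_adjoint U * U = 1\<^sub>m q"
    and les: "length es = q" and D: "mat_adjoint U * ?H * U = dmat es"
    and cp: "char_poly ?H = (\<Prod>e\<leftarrow>es. [:-e,1:])" and srt: "sorted (map Re es)"
    using spectral[OF H herm] by blast
  have UU': "U * mat_adjoint U = 1\<^sub>m q" using mat_mult_left_right_inverse[OF adj_carrier[OF U] U UU] .
  have BU: "B * U \<in> carrier_mat p q" using B U by simp
  have D': "mat_adjoint (B * U) * (B * U) = dmat es"
    unfolding D[symmetric] adj_mult[OF B U] using B U adj_carrier[OF U] adj_carrier[OF B]
    by (simp only: assoc_mult_mat[OF adj_carrier[OF U] adj_carrier[OF B] BU]
       assoc_mult_mat[OF adj_carrier[OF U] mult_carrier_mat[OF adj_carrier[OF B] B] U]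
       assoc_mult_mat[OF adj_carrier[OF B] B U])
  have es_real: "\<And>j. j < q \<Longrightarrow> es!j = complex_of_real (sqn (col (B * U) j))"
  proof -
    fix j assume j: "j < q"
    have "es!j = dmat es $$ (j,j)" using j les by (simp add: dmat_def)
    also have "\<dots> = col (B * U) j \<bullet>c col (B * U) j" unfolding D'[symmetric]
      by (rule mat_adj_mult_index[OF BU j j])
    finally show "es!j = complex_of_real (sqn (col (B * U) j))" by (simp add: cself)
  qed
  define lam where "lam = map Re es"
  have llam: "length lam = q" unfolding lam_def using les by simp
  have lam_nn: "\<forall>j<q. 0 \<le> lam!j" unfolding lam_def using es_real les by simp
  have es_lam: "\<And>j. j < q \<Longrightarrow> es!j = complex_of_real (lam!j)" unfolding lam_def using es_real les by simp
  have slam: "sorted lam" unfolding lam_def using srt .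
  have "sing_vals B = sorted_list_of_multiset (mset (map (\<lambda>z. sqrt (Re z)) es))"
    unfolding sing_vals_def cp proots_lin by simp
  also have "\<dots> = map (\<lambda>z. sqrt (Re z)) es"
  proof -
    have "sorted (map (\<lambda>z. sqrt (Re z)) es)" using srt
      by (auto simp: sorted_iff_nth_mono)
    then show ?thesis by (simp only: sorted_list_of_multiset_mset sorted_sort_id)
  qed
  also have "\<dots> = map sqrt lam" unfolding lam_def by simp
  finally have sv: "sing_vals B = map sqrt lam" .
  have ray: "\<forall>y\<in>carrier_vec q. sqn (B *\<^sub>v (U *\<^sub>v y)) = (\<Sum>j<q. lam!j * (cmod (y$j))^2)"
  proof
    fix y :: "complex vec" assume y: "y \<in> carrier_vec q"
    have "complex_of_real (sqn (B *\<^sub>v (U *\<^sub>v y))) = complex_of_real (sqn ((B * U) *\<^sub>v y))"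
      using B U y by simp
    also have "\<dots> = y \<bullet>c (dmat es *\<^sub>v y)" using sqn_mult[OF BU y] D' by simp
    also have "\<dots> = (\<Sum>j<q. cnj (es!j) * y$j * cnj (y$j))" using dmat_mult_vec[of y es] y les by simp
    also have "\<dots> = (\<Sum>j<q. complex_of_real (lam!j * (cmod (y$j))^2))"
    proof (rule sum.cong)
      fix j assume "j \<in> {..<q}"
      then have j: "j < q" by simp
      have "y$j * cnj (y$j) = complex_of_real ((cmod (y$j))^2)" by (metis complex_norm_square of_real_power)
      then show "cnj (es!j) * y$j * cnj (y$j) = complex_of_real (lam!j * (cmod (y$j))^2)"
        using es_lam[OF j] by (simp add: mult.assoc)
    qed simp
    finally show "sqn (B *\<^sub>v (U *\<^sub>v y)) = (\<Sum>j<q. lam!j * (cmod (y$j))^2)"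
      by (simp only: of_real_sum[symmetric] of_real_eq_iff)
  qed
  show ?thesis using U UU UU' llam slam lam_nn sv ray by blast
qed



lemma sum_split: assumes "l \<le> (n::nat)"
  shows "(\<Sum>j<n. f j) = (\<Sum>j<l. f j) + (\<Sum>j<n-l. f (l+j))"
proof -
  have "(\<Sum>j<n. f j) = (\<Sum>j\<in>{0..<l}. f j) + (\<Sum>j\<in>{l..<n}. f j)"
    using sum.atLeastLessThan_concat[of 0 l n f] assms by (simp add: atLeast0LessThan)
  moreover have "(\<Sum>j\<in>{l..<n}. f j) = (\<Sum>j\<in>{0..<n-l}. f (j + l))"
    using sum.shift_bounds_nat_ivl[of f 0 l "n-l"] assms by simp
  ultimately show ?thesis by (simp add: atLeast0LessThan add.commute)
qed

lemma sigma_eq: assumes "sing_vals B = map sqrt lam" "1 \<le> i" "i \<le> length lam"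
  shows "sigma i B = sqrt (lam ! (i-1))"
  using assms unfolding sigma_def by simp

lemma sv_facts: assumes B: "(B::complex mat) \<in> carrier_mat p q"
  shows "\<exists>U lam. U \<in> carrier_mat q q \<and> mat_adjoint U * U = 1\<^sub>m q \<and> U * mat_adjoint U = 1\<^sub>m q \<and>
    length lam = q \<and> sorted lam \<and> (\<forall>j<q. 0 \<le> lam!j) \<and>
    (\<forall>j. 1 \<le> j \<longrightarrow> j \<le> q \<longrightarrow> sigma j B = sqrt (lam!(j-1)) \<and> (sigma j B)^2 = lam!(j-1)) \<and>
    (\<forall>y\<in>carrier_vec q. sqn (B *\<^sub>v (U *\<^sub>v y)) = (\<Sum>j<q. lam!j * (cmod (y$j))^2))"
proof -
  obtain U lam where U: "U \<in> carrier_mat q q" "mat_adjoint U * U = 1\<^sub>m q" "U * mat_adjoint U = 1\<^sub>m q"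
    and l: "length lam = q" "sorted lam" "\<forall>j<q. 0 \<le> lam!j" and sv: "sing_vals B = map sqrt lam"
    and r: "\<forall>y\<in>carrier_vec q. sqn (B *\<^sub>v (U *\<^sub>v y)) = (\<Sum>j<q. lam!j * (cmod (y$j))^2)"
    using svpkg[OF B] by blast
  have "\<forall>j. 1 \<le> j \<longrightarrow> j \<le> q \<longrightarrow> sigma j B = sqrt (lam!(j-1)) \<and> (sigma j B)^2 = lam!(j-1)"
    using sigma_eq[OF sv] l by auto
  then show ?thesis using U l r by blast
qed

lemma sqn_vec: "sqn (vec d f) = (\<Sum>j<d. (cmod (f j))^2)"
  unfolding sqn_def by simp

lemma sigma_nonneg: assumes B: "(B::complex mat) \<in> carrier_mat p q" and "1 \<le> j" "j \<le> q"
  shows "0 \<le> sigma j B"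
  using sv_facts[OF B] assms by auto

lemma sv_general: assumes B: "(B::complex mat) \<in> carrier_mat p q" and x: "x \<in> carrier_vec q"
  and i: "1 \<le> i" "i \<le> q"
  shows "(sigma 1 B)^2 * sqn x \<le> sqn (B *\<^sub>v x)" "sqn (B *\<^sub>v x) \<le> (sigma q B)^2 * sqn x"
proof -
  obtain U lam where U: "U \<in> carrier_mat q q" "mat_adjoint U * U = 1\<^sub>m q" "U * mat_adjoint U = 1\<^sub>m q"
    and l: "length lam = q" "sorted lam" "\<forall>j<q. 0 \<le> lam!j"
    and sg: "\<forall>j. 1 \<le> j \<longrightarrow> j \<le> q \<longrightarrow> sigma j B = sqrt (lam!(j-1)) \<and> (sigma j B)^2 = lam!(j-1)"
    and r: "\<forall>y\<in>carrier_vec q. sqn (B *\<^sub>v (U *\<^sub>v y)) = (\<Sum>j<q. lam!j * (cmod (y$j))^2)"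
    using sv_facts[OF B] by blast
  define y where "y = mat_adjoint U *\<^sub>v x"
  have y: "y \<in> carrier_vec q" unfolding y_def using mult_mat_vec_carrier[OF adj_carrier[OF U(1)] x] .
  have xy: "x = U *\<^sub>v y" unfolding y_def using U x
    by (simp add: assoc_mult_mat_vec[symmetric, of _ q q _ q])
  have sxy: "sqn x = sqn y" unfolding xy by (rule sqn_unitary[OF U(1) U(2) y])
  have sy: "sqn y = (\<Sum>j<q. (cmod (y$j))^2)" unfolding sqn_def using y by simp
  have sq1: "(sigma 1 B)^2 = lam!0" using sg i by auto
  have sqq: "(sigma q B)^2 = lam!(q-1)" using sg i l by auto
  have "(sigma 1 B)^2 * sqn x = (\<Sum>j<q. lam!0 * (cmod (y$j))^2)"
    by (simp only: sq1 sxy sy sum_distrib_left)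
  also have "\<dots> \<le> (\<Sum>j<q. lam!j * (cmod (y$j))^2)"
    by (rule sum_mono, rule mult_right_mono, insert l, auto intro: sorted_nth_mono)
  also have "\<dots> = sqn (B *\<^sub>v x)" using r y xy by simp
  finally show "(sigma 1 B)^2 * sqn x \<le> sqn (B *\<^sub>v x)" .
  have "sqn (B *\<^sub>v x) = (\<Sum>j<q. lam!j * (cmod (y$j))^2)" using r y xy by simp
  also have "\<dots> \<le> (\<Sum>j<q. lam!(q-1) * (cmod (y$j))^2)"
    by (rule sum_mono, rule mult_right_mono, insert l, auto intro: sorted_nth_mono)
  also have "\<dots> = (sigma q B)^2 * sqn x"
    by (simp only: sqq sxy sy sum_distrib_left)
  finally show "sqn (B *\<^sub>v x) \<le> (sigma q B)^2 * sqn x" .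
qed

lemma sv_sub: assumes B: "(B::complex mat) \<in> carrier_mat p q" and i: "1 \<le> i" "i \<le> q"
  shows "\<exists>U. U \<in> carrier_mat q q \<and> mat_adjoint U * U = 1\<^sub>m q \<and>
    (\<forall>y\<in>carrier_vec q. (\<forall>j. i \<le> j \<longrightarrow> j < q \<longrightarrow> y$j = 0) \<longrightarrow> sqn (B *\<^sub>v (U *\<^sub>v y)) \<le> (sigma i B)^2 * sqn y)"
proof -
  obtain U lam where U: "U \<in> carrier_mat q q" "mat_adjoint U * U = 1\<^sub>m q" "U * mat_adjoint U = 1\<^sub>m q"
    and l: "length lam = q" "sorted lam" "\<forall>j<q. 0 \<le> lam!j"
    and sg: "\<forall>j. 1 \<le> j \<longrightarrow> j \<le> q \<longrightarrow> sigma j B = sqrt (lam!(j-1)) \<and> (sigma j B)^2 = lam!(j-1)"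
    and r: "\<forall>y\<in>carrier_vec q. sqn (B *\<^sub>v (U *\<^sub>v y)) = (\<Sum>j<q. lam!j * (cmod (y$j))^2)"
    using sv_facts[OF B] by blast
  have "\<forall>y\<in>carrier_vec q. (\<forall>j. i \<le> j \<longrightarrow> j < q \<longrightarrow> y$j = 0) \<longrightarrow> sqn (B *\<^sub>v (U *\<^sub>v y)) \<le> (sigma i B)^2 * sqn y"
  proof (intro ballI impI)
    fix y :: "complex vec" assume y: "y \<in> carrier_vec q" and z: "\<forall>j. i \<le> j \<longrightarrow> j < q \<longrightarrow> y$j = 0"
    have "sqn (B *\<^sub>v (U *\<^sub>v y)) = (\<Sum>j<q. lam!j * (cmod (y$j))^2)" using r y by simp
    also have "\<dots> \<le> (\<Sum>j<q. lam!(i-1) * (cmod (y$j))^2)"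
    proof (rule sum_mono)
      fix j assume j: "j \<in> {..<q}"
      show "lam!j * (cmod (y$j))^2 \<le> lam!(i-1) * (cmod (y$j))^2"
      proof (cases "j < i")
        case True
        then show ?thesis using j l i by (intro mult_right_mono) (auto intro: sorted_nth_mono)
      next
        case False
        then show ?thesis using z j by auto
      qed
    qed
    also have "\<dots> = (sigma i B)^2 * sqn y"
    proof -
      have sq: "(sigma i B)^2 = lam!(i-1)" using sg i by blast
      show ?thesis using y by (simp only: sq) (simp add: sqn_def sum_distrib_left)
    qed
    finally show "sqn (B *\<^sub>v (U *\<^sub>v y)) \<le> (sigma i B)^2 * sqn y" .
  qed
  then show ?thesis using U by blast
qed

lemma sv_sup: assumes B: "(B::complex mat) \<in> carrier_mat p q" and i: "1 \<le> i" "i \<le> q"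
  shows "\<exists>U. U \<in> carrier_mat q q \<and> mat_adjoint U * U = 1\<^sub>m q \<and> U * mat_adjoint U = 1\<^sub>m q \<and>
    (\<forall>y\<in>carrier_vec q. (\<forall>j<i-1. y$j = 0) \<longrightarrow> (sigma i B)^2 * sqn y \<le> sqn (B *\<^sub>v (U *\<^sub>v y)))"
proof -
  obtain U lam where U: "U \<in> carrier_mat q q" "mat_adjoint U * U = 1\<^sub>m q" "U * mat_adjoint U = 1\<^sub>m q"
    and l: "length lam = q" "sorted lam" "\<forall>j<q. 0 \<le> lam!j"
    and sg: "\<forall>j. 1 \<le> j \<longrightarrow> j \<le> q \<longrightarrow> sigma j B = sqrt (lam!(j-1)) \<and> (sigma j B)^2 = lam!(j-1)"
    and r: "\<forall>y\<in>carrier_vec q. sqn (B *\<^sub>v (U *\<^sub>v y)) = (\<Sum>j<q. lam!j * (cmod (y$j))^2)"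
    using sv_facts[OF B] by blast
  have "\<forall>y\<in>carrier_vec q. (\<forall>j<i-1. y$j = 0) \<longrightarrow> (sigma i B)^2 * sqn y \<le> sqn (B *\<^sub>v (U *\<^sub>v y))"
  proof (intro ballI impI)
    fix y :: "complex vec" assume y: "y \<in> carrier_vec q" and z: "\<forall>j<i-1. y$j = 0"
    have sq: "(sigma i B)^2 = lam!(i-1)" using sg i by blast
    have "(sigma i B)^2 * sqn y = (\<Sum>j<q. lam!(i-1) * (cmod (y$j))^2)"
      using y by (simp only: sq) (simp add: sqn_def sum_distrib_left)
    also have "\<dots> \<le> (\<Sum>j<q. lam!j * (cmod (y$j))^2)"
    proof (rule sum_mono)
      fix j assume j: "j \<in> {..<q}"
      show "lam!(i-1) * (cmod (y$j))^2 \<le> lam!j * (cmod (y$j))^2"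
      proof (cases "j < i - 1")
        case False
        then show ?thesis using j l i by (intro mult_right_mono) (auto intro: sorted_nth_mono)
      next
        case True
        then show ?thesis using z j by auto
      qed
    qed
    also have "\<dots> = sqn (B *\<^sub>v (U *\<^sub>v y))" using r y by simp
    finally show "(sigma i B)^2 * sqn y \<le> sqn (B *\<^sub>v (U *\<^sub>v y))" .
  qed
  then show ?thesis using U by blast
qed

lemma sqn_tri: assumes "dim_vec a = d" "dim_vec b = d"
  shows "sqrt (sqn (vec d (\<lambda>j. a$j - b$j))) \<le> sqrt (sqn a) + sqrt (sqn b)"
proof -
  have e: "\<And>v. dim_vec v = d \<Longrightarrow> sqrt (sqn v) = L2_set (\<lambda>j. cmod (v$j)) {..<d}"
    unfolding sqn_def L2_set_def by simp
  have "sqrt (sqn (vec d (\<lambda>j. a$j - b$j))) = L2_set (\<lambda>j. cmod (a$j - b$j)) {..<d}"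
    unfolding sqn_def L2_set_def by simp
  also have "\<dots> \<le> L2_set (\<lambda>j. cmod (a$j) + cmod (b$j)) {..<d}"
    by (rule L2_set_mono) (auto simp: norm_triangle_ineq4)
  also have "\<dots> \<le> L2_set (\<lambda>j. cmod (a$j)) {..<d} + L2_set (\<lambda>j. cmod (b$j)) {..<d}"
    by (rule L2_set_triangle_ineq)
  also have "\<dots> = sqrt (sqn a) + sqrt (sqn b)" using e assms by simp
  finally show ?thesis .
qed



lemma submat_carrier[simp]: "submat M r0 c0 p q \<in> carrier_mat p q"
  unfolding submat_def by simp
lemma submat_dims[simp]: "dim_row (submat M r0 c0 p q) = p" "dim_col (submat M r0 c0 p q) = q"
  unfolding submat_def by simp_all
lemma submat_index[simp]: "i < p \<Longrightarrow> j < q \<Longrightarrow> submat M r0 c0 p q $$ (i,j) = M $$ (r0+i, c0+j)"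
  unfolding submat_def by simp

lemma mv_entry: assumes "(A::complex mat) \<in> carrier_mat a b" "v \<in> carrier_vec b" "r < a"
  shows "(A *\<^sub>v v) $ r = (\<Sum>t<b. A $$ (r,t) * v $ t)"
  using assms by (auto simp: scalar_prod_def atLeast0LessThan intro!: sum.cong)

lemma sqn_zero: assumes "sqn v = 0" "j < dim_vec v" shows "v $ j = 0"
proof -
  have "\<forall>t\<in>{..<dim_vec v}. (cmod (v$t))^2 = 0"
    using assms(1) unfolding sqn_def by (subst sum_nonneg_eq_0_iff[symmetric]) auto
  then show ?thesis using assms(2) by auto
qed

lemma real_key:
  fixes s sn s1 G H N X z :: real
  assumes s0: "0 \<le> s" and ss1: "s < s1" and sn0: "0 \<le> sn" and G0: "0 \<le> G" and H0: "0 \<le> H"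
    and N0: "0 \<le> N" and X0: "0 \<le> X" and z0: "0 \<le> z"
    and i: "G^2 + z \<le> s^2 * (N^2 + X^2)"
    and ii: "s1 * N \<le> G + H"
    and iii: "H^2 + z \<le> sn^2 * X^2"
  shows "z \<le> ((sn / s1 + 1) * s)^2 * X^2"
proof -
  have s1p: "0 < s1" using s0 ss1 by linarith
  define a where "a = s^2"
  define b where "b = s1^2"
  have a0: "0 \<le> a" unfolding a_def by simp
  have bp: "0 < b" unfolding b_def using s1p by simp
  have ab: "a < b" unfolding a_def b_def using s0 ss1 by (simp add: power_strict_mono)
  have "(s1 * N)^2 \<le> (G + H)^2" using ii s1p N0 by (intro power_mono) auto
  then have bN: "b * N^2 \<le> (G + H)^2" unfolding b_def by (simp add: power_mult_distrib)
  have "b * (G^2 + z) \<le> b * (a * (N^2 + X^2))" using i bp unfolding a_def by simp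
  also have "\<dots> = a * (b * N^2) + a * b * X^2" by (simp add: algebra_simps)
  also have "\<dots> \<le> a * (G+H)^2 + a * b * X^2" using bN a0 by (simp add: mult_left_mono)
  finally have A: "b * z \<le> a * (G+H)^2 - b * G^2 + a * b * X^2" by (simp add: algebra_simps)
  have sq: "a * (G+H)^2 * (b - a) - G^2 * b * (b - a) - a * H^2 * b = - (((b - a) * G - a * H)^2)"
    by (simp add: power2_eq_square algebra_simps)
  have sqnn: "0 \<le> ((b - a) * G - a * H)^2" by simp
  have dist: "(a * (G+H)^2 - b * G^2) * (b - a) = a * (G+H)^2 * (b - a) - G^2 * b * (b - a)"
    by (simp add: algebra_simps)
  have B: "(a * (G+H)^2 - b * G^2) * (b - a) \<le> a * H^2 * b"
    using sq sqnn dist by linarith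
  have "b * z * (b - a) \<le> (a * (G+H)^2 - b * G^2 + a * b * X^2) * (b - a)"
    using A ab by (intro mult_right_mono) auto
  also have "\<dots> = (a * (G+H)^2 - b * G^2) * (b - a) + a * b * X^2 * (b - a)" by (simp add: algebra_simps)
  finally have C: "b * (z * (b - a)) \<le> b * (a * H^2 + a * X^2 * (b - a))"
    using B by (simp add: algebra_simps)
  then have "z * (b - a) \<le> a * H^2 + a * X^2 * (b - a)"
    using bp by (simp add: mult_le_cancel_left_pos)
  also have "\<dots> \<le> a * (sn^2 * X^2 - z) + a * X^2 * (b - a)"
    using iii a0 by (simp add: mult_left_mono)
  finally have "z * b \<le> a * X^2 * (b - a + sn^2)" by (simp add: algebra_simps)
  also have "\<dots> \<le> a * X^2 * (s1 + sn)^2"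
  proof -
    have "b - a + sn^2 \<le> (s1 + sn)^2" unfolding b_def using a0 s1p sn0
      by (simp add: power2_eq_square algebra_simps)
    then show ?thesis using a0 by (intro mult_left_mono) auto
  qed
  finally have D: "z * b \<le> a * X^2 * (s1 + sn)^2" .
  have "((sn / s1 + 1) * s)^2 * X^2 = a * X^2 * (s1 + sn)^2 / b"
    unfolding a_def b_def using s1p by (simp add: field_simps power2_eq_square)
  then show ?thesis using D bp by (simp add: pos_le_divide_eq)
qed

lemma real_inj:
  fixes s s1 G N :: real
  assumes s0: "0 \<le> s" and ss1: "s < s1" and G0: "0 \<le> G" and N0: "0 \<le> N"
    and i: "G^2 \<le> s^2 * N^2" and ii: "s1 * N \<le> G"
  shows "N = 0"
proof (rule ccontr)
  assume "N \<noteq> 0"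
  then have Np: "0 < N" using N0 by simp
  have "(s1 * N)^2 \<le> G^2" using ii Np ss1 s0 by (intro power_mono) auto
  also have "\<dots> \<le> s^2 * N^2" by (rule i)
  also have "\<dots> < s1^2 * N^2" using Np s0 ss1 by (intro mult_strict_right_mono power_strict_mono) auto
  finally show False by (simp add: power_mult_distrib)
qed



lemma core:
  fixes R U :: "complex mat"
  assumes R: "R \<in> carrier_mat n n" and ut: "upper_triangular R" and ln: "l + k = n" and l0: "0 < l"
    and U: "U \<in> carrier_mat n n" and UU: "mat_adjoint U * U = 1\<^sub>m n"
    and y: "y \<in> carrier_vec n"
    and hRv: "sqn (R *\<^sub>v (U *\<^sub>v y)) \<le> s^2 * sqn y"
    and s0: "0 \<le> s" and ss1: "s < sigma 1 (submat R 0 0 n l)"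
    and xdef: "x = vec k (\<lambda>a. (U *\<^sub>v y) $ (l+a))"
  shows "sqn (submat R l l k k *\<^sub>v x) \<le> ((sigma n R / sigma 1 (submat R 0 0 n l) + 1) * s)^2 * sqn x"
    "sqn x = 0 \<Longrightarrow> sqn y = 0"
proof -
  define C where "C = submat R 0 0 n l"
  define R22 where "R22 = submat R l l k k"
  define s1 where "s1 = sigma 1 C"
  define sn where "sn = sigma n R"
  have C: "C \<in> carrier_mat n l" unfolding C_def by simp
  have R22: "R22 \<in> carrier_mat k k" unfolding R22_def by simp
  have n0: "0 < n" using ln l0 by simp
  have sn0: "0 \<le> sn" unfolding sn_def using sigma_nonneg[OF R, of n] n0 by simp
  have ss1': "s < s1" unfolding s1_def C_def using ss1 .
  define v where "v = U *\<^sub>v y"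
  have v: "v \<in> carrier_vec n" unfolding v_def using U y by simp
  have svy: "sqn v = sqn y" unfolding v_def by (rule sqn_unitary[OF U UU y])
  have hRv': "sqn (R *\<^sub>v v) \<le> s^2 * sqn v" using hRv svy unfolding v_def by simp
  have x: "x = vec k (\<lambda>a. v $ (l+a))" unfolding xdef v_def ..
  have xc: "x \<in> carrier_vec k" unfolding x by simp
  define v1 where "v1 = vec l (\<lambda>j. v $ j)"
  have v1: "v1 \<in> carrier_vec l" unfolding v1_def by simp
  have nl: "n - l = k" using ln by simp
  have split_v: "sqn v = sqn v1 + sqn x"
    using v sum_split[of l n "\<lambda>j. (cmod (v$j))^2"] ln nl
    unfolding sqn_def v1_def x by simp
  define z0 where "z0 = vec n (\<lambda>j. if j < l then 0 else v $ j)"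
  have z0: "z0 \<in> carrier_vec n" unfolding z0_def by simp
  have sz0: "sqn z0 = sqn x"
  proof -
    have "sqn z0 = (\<Sum>j<l. (cmod (z0$j))^2) + (\<Sum>j<n-l. (cmod (z0$(l+j)))^2)"
      unfolding sqn_def using z0 sum_split[of l n "\<lambda>j. (cmod (z0$j))^2"] ln nl by simp
    also have "\<dots> = sqn x" unfolding z0_def x sqn_def using ln nl by simp
    finally show ?thesis .
  qed
  define w where "w = R *\<^sub>v z0"
  have w: "w \<in> carrier_vec n" unfolding w_def using R z0 by simp
  have hw: "sqn w \<le> sn^2 * sqn z0" unfolding w_def sn_def using sv_general(2)[OF R z0, of 1] n0 by simp
  have eRv: "\<And>r. r < n \<Longrightarrow> (R *\<^sub>v v) $ r = (\<Sum>t<l. R $$ (r,t) * v $ t) + (\<Sum>a<k. R $$ (r,l+a) * v $ (l+a))"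
    using mv_entry[OF R v] sum_split[of l n] ln nl by simp
  have ew: "\<And>r. r < n \<Longrightarrow> w $ r = (\<Sum>a<k. R $$ (r,l+a) * v $ (l+a))"
  proof -
    fix r assume r: "r < n"
    have "w $ r = (\<Sum>t<l. R $$ (r,t) * z0 $ t) + (\<Sum>a<k. R $$ (r,l+a) * z0 $ (l+a))"
      unfolding w_def using mv_entry[OF R z0 r] sum_split[of l n] ln nl by simp
    also have "\<dots> = (\<Sum>a<k. R $$ (r,l+a) * v $ (l+a))" unfolding z0_def using ln nl by simp
    finally show "w $ r = (\<Sum>a<k. R $$ (r,l+a) * v $ (l+a))" .
  qed
  have eC: "\<And>r. r < n \<Longrightarrow> (C *\<^sub>v v1) $ r = (\<Sum>t<l. R $$ (r,t) * v $ t)"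
    using mv_entry[OF C v1] unfolding C_def v1_def by simp
  have eLow: "\<And>a. a < k \<Longrightarrow> (\<Sum>t<l. R $$ (l+a,t) * v $ t) = 0"
  proof -
    fix a assume a: "a < k"
    have "\<And>t. t < l \<Longrightarrow> R $$ (l+a,t) = 0" using ut R a ln unfolding upper_triangular_def by auto
    then show "(\<Sum>t<l. R $$ (l+a,t) * v $ t) = 0" by simp
  qed
  have eR22: "\<And>a. a < k \<Longrightarrow> (R22 *\<^sub>v x) $ a = (\<Sum>b<k. R $$ (l+a,l+b) * v $ (l+b))"
    using mv_entry[OF R22 xc] unfolding R22_def x by simp
  define g where "g = vec l (\<lambda>r. (R *\<^sub>v v) $ r)"
  define f where "f = vec l (\<lambda>r. w $ r)"
  have sRv: "sqn (R *\<^sub>v v) = sqn g + sqn (R22 *\<^sub>v x)"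
  proof -
    have "sqn (R *\<^sub>v v) = (\<Sum>j<l. (cmod ((R *\<^sub>v v)$j))^2) + (\<Sum>j<n-l. (cmod ((R *\<^sub>v v)$(l+j)))^2)"
      unfolding sqn_def using R sum_split[of l n "\<lambda>j. (cmod ((R *\<^sub>v v)$j))^2"] ln nl by simp
    also have "(\<Sum>j<n-l. (cmod ((R *\<^sub>v v)$(l+j)))^2) = (\<Sum>j<k. (cmod ((R22 *\<^sub>v x)$j))^2)"
      using nl eRv eLow eR22 ln nl by (intro sum.cong) auto
    finally show ?thesis unfolding g_def sqn_def using R22 xc by simp
  qed
  have sw: "sqn w = sqn f + sqn (R22 *\<^sub>v x)"
  proof -
    have "sqn w = (\<Sum>j<l. (cmod (w$j))^2) + (\<Sum>j<n-l. (cmod (w$(l+j)))^2)"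
      unfolding sqn_def using w sum_split[of l n "\<lambda>j. (cmod (w$j))^2"] ln nl by simp
    also have "(\<Sum>j<n-l. (cmod (w$(l+j)))^2) = (\<Sum>j<k. (cmod ((R22 *\<^sub>v x)$j))^2)"
      using nl ew eR22 ln nl by (intro sum.cong) auto
    finally show ?thesis unfolding f_def sqn_def using R22 xc by simp
  qed
  have sC: "sqn (C *\<^sub>v v1) = sqn (vec l (\<lambda>r. g$r - f$r))"
  proof -
    have "sqn (C *\<^sub>v v1) = (\<Sum>j<l. (cmod ((C *\<^sub>v v1)$j))^2) + (\<Sum>j<n-l. (cmod ((C *\<^sub>v v1)$(l+j)))^2)"
      unfolding sqn_def using C sum_split[of l n "\<lambda>j. (cmod ((C *\<^sub>v v1)$j))^2"] ln nl by simp
    also have "(\<Sum>j<n-l. (cmod ((C *\<^sub>v v1)$(l+j)))^2) = 0"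
      using nl eC eLow ln nl by (intro sum.neutral) auto
    also have "(\<Sum>j<l. (cmod ((C *\<^sub>v v1)$j))^2) = (\<Sum>j<l. (cmod (g$j - f$j))^2)"
      using eC eRv ew ln unfolding g_def f_def by (intro sum.cong) auto
    finally show ?thesis unfolding sqn_def by simp
  qed
  have hC: "s1^2 * sqn v1 \<le> sqn (C *\<^sub>v v1)" unfolding s1_def using sv_general(1)[OF C v1, of 1] l0 by simp
  have s1p: "0 < s1" using s0 ss1' by linarith
  have ii: "s1 * sqrt (sqn v1) \<le> sqrt (sqn g) + sqrt (sqn f)"
  proof -
    have "s1 * sqrt (sqn v1) = sqrt (s1^2 * sqn v1)" using s1p by (simp add: real_sqrt_mult)
    also have "\<dots> \<le> sqrt (sqn (C *\<^sub>v v1))" using hC by simp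
    also have "\<dots> \<le> sqrt (sqn g) + sqrt (sqn f)" unfolding sC by (rule sqn_tri) (auto simp: g_def f_def)
    finally show ?thesis .
  qed
  have i: "(sqrt (sqn g))^2 + sqn (R22 *\<^sub>v x) \<le> s^2 * ((sqrt (sqn v1))^2 + (sqrt (sqn x))^2)"
    using hRv' sRv split_v by simp
  have iii: "(sqrt (sqn f))^2 + sqn (R22 *\<^sub>v x) \<le> sn^2 * (sqrt (sqn x))^2"
    using hw sw sz0 by simp
  have "sqn (R22 *\<^sub>v x) \<le> ((sn / s1 + 1) * s)^2 * (sqrt (sqn x))^2"
    by (rule real_key[OF s0 ss1' sn0 _ _ _ _ _ i ii iii]) auto
  then show "sqn (submat R l l k k *\<^sub>v x) \<le> ((sigma n R / sigma 1 (submat R 0 0 n l) + 1) * s)^2 * sqn x"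
    unfolding R22_def sn_def s1_def C_def by simp
  assume x0: "sqn x = 0"
  then have "sqn z0 = 0" using sz0 by simp
  then have "sqn w \<le> 0" using hw by simp
  then have "sqn f = 0" "sqn (R22 *\<^sub>v x) = 0" using sw sqn_nonneg[of f] sqn_nonneg[of "R22 *\<^sub>v x"]
    by linarith+
  then have "sqrt (sqn v1) = 0"
    using real_inj[OF s0 ss1' _ _ _, of "sqrt (sqn g)" "sqrt (sqn v1)"] i ii x0 by simp
  then show "sqn y = 0" using split_v svy x0 by simp
qed



theorem main_R:
  fixes R :: "complex mat"
  assumes R: "R \<in> carrier_mat n n" and ut: "upper_triangular R" and kn: "k < n"
    and i1: "1 \<le> i" and ik: "i \<le> k"
    and gap: "sigma i R < sigma 1 (submat R 0 0 n (n - k))"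
  shows "sigma i (submat R (n-k) (n-k) k k) \<le> (sigma n R / sigma 1 (submat R 0 0 n (n - k)) + 1) * sigma i R"
proof -
  define l where "l = n - k"
  have ln: "l + k = n" and l0: "0 < l" using kn by (auto simp: l_def)
  define R22 where "R22 = submat R l l k k"
  have R22: "R22 \<in> carrier_mat k k" unfolding R22_def by simp
  define s where "s = sigma i R"
  define s1 where "s1 = sigma 1 (submat R 0 0 n l)"
  define tau where "tau = (sigma n R / s1 + 1) * s"
  have s0: "0 \<le> s" unfolding s_def using sigma_nonneg[OF R i1] ik kn by simp
  have ss1: "s < sigma 1 (submat R 0 0 n l)" using gap unfolding s_def l_def .
  have s1p: "0 < s1" unfolding s1_def using s0 ss1 by linarith
  have sn0: "0 \<le> sigma n R" using sigma_nonneg[OF R, of n] kn by simp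
  have tau0: "0 \<le> tau" unfolding tau_def using s0 s1p sn0 by simp
  obtain U where U: "U \<in> carrier_mat n n" and UU: "mat_adjoint U * U = 1\<^sub>m n"
    and subU: "\<forall>y\<in>carrier_vec n. (\<forall>j. i \<le> j \<longrightarrow> j < n \<longrightarrow> y$j = 0) \<longrightarrow> sqn (R *\<^sub>v (U *\<^sub>v y)) \<le> (sigma i R)^2 * sqn y"
    using sv_sub[OF R i1] ik kn by auto
  obtain U2 where U2: "U2 \<in> carrier_mat k k" and UU2: "mat_adjoint U2 * U2 = 1\<^sub>m k"
    and UU2': "U2 * mat_adjoint U2 = 1\<^sub>m k"
    and supU2: "\<forall>y\<in>carrier_vec k. (\<forall>j<i-1. y$j = 0) \<longrightarrow> (sigma i R22)^2 * sqn y \<le> sqn (R22 *\<^sub>v (U2 *\<^sub>v y))"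
    using sv_sup[OF R22 i1 ik] by auto
  define E where "E = mat n i (\<lambda>(a,b). if a = b then (1::complex) else 0)"
  define P where "P = mat k n (\<lambda>(a,b). if b = l + a then (1::complex) else 0)"
  have E: "E \<in> carrier_mat n i" unfolding E_def by simp
  have P: "P \<in> carrier_mat k n" unfolding P_def by simp
  define T where "T = mat_adjoint U2 * P * U * E"
  have T: "T \<in> carrier_mat k i" unfolding T_def
    using mult_carrier_mat[OF mult_carrier_mat[OF mult_carrier_mat[OF adj_carrier[OF U2] P] U] E] .
  define M where "M = mat i i (\<lambda>(r,t). if r < i - 1 then T $$ (r,t) else 0)"
  have M: "M \<in> carrier_mat i i" unfolding M_def by simp
  have "det M = (\<Sum>j<i. M $$ (i-1,j) * cofactor M (i-1) j)"
    by (rule laplace_expansion_row[OF M]) (use i1 in auto)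
  also have "\<dots> = 0" by (intro sum.neutral) (auto simp: M_def)
  finally have "det M = 0" .
  with det_0_iff_vec_prod_zero[OF M] obtain c where c: "c \<in> carrier_vec i" and c0: "c \<noteq> 0\<^sub>v i"
    and Mc: "M *\<^sub>v c = 0\<^sub>v i" by auto
  define y where "y = E *\<^sub>v c"
  have y: "y \<in> carrier_vec n" unfolding y_def using E c by simp
  have yE: "\<And>j. j < n \<Longrightarrow> y $ j = (if j < i then c $ j else 0)"
  proof -
    fix j assume j: "j < n"
    have "y $ j = (\<Sum>t<i. (if j = t then 1 else 0) * c $ t)"
      unfolding y_def using mv_entry[OF E c j] j by (simp add: E_def)
    also have "\<dots> = (\<Sum>t<i. if j = t then c $ t else 0)" by (rule sum.cong) auto
    also have "\<dots> = (if j < i then c $ j else 0)" by simp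
    finally show "y $ j = (if j < i then c $ j else 0)" .
  qed
  have yz: "\<forall>j. i \<le> j \<longrightarrow> j < n \<longrightarrow> y $ j = 0" using yE by auto
  define x where "x = vec k (\<lambda>a. (U *\<^sub>v y) $ (l+a))"
  have Uy: "U *\<^sub>v y \<in> carrier_vec n" using U y by simp
  have xP: "x = P *\<^sub>v (U *\<^sub>v y)"
  proof (rule eq_vecI)
    fix a assume "a < dim_vec (P *\<^sub>v (U *\<^sub>v y))"
    then have a: "a < k" using P by simp
    have "(P *\<^sub>v (U *\<^sub>v y)) $ a = (\<Sum>t<n. (if t = l + a then 1 else 0) * (U *\<^sub>v y) $ t)"
      using mv_entry[OF P Uy a] a by (simp add: P_def)
    also have "\<dots> = (\<Sum>t<n. if t = l + a then (U *\<^sub>v y) $ t else 0)" by (rule sum.cong) auto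
    also have "\<dots> = (U *\<^sub>v y) $ (l + a)" using a ln by simp
    finally show "x $ a = (P *\<^sub>v (U *\<^sub>v y)) $ a" unfolding x_def using a by simp
  qed (use P in \<open>simp add: x_def\<close>)
  have hRv: "sqn (R *\<^sub>v (U *\<^sub>v y)) \<le> s^2 * sqn y" using subU y yz unfolding s_def by blast
  have c1: "sqn (R22 *\<^sub>v x) \<le> tau^2 * sqn x"
    using core(1)[OF R ut ln l0 U UU y hRv s0 ss1 x_def] unfolding R22_def tau_def s1_def .
  have c2: "sqn x = 0 \<Longrightarrow> sqn y = 0" using core(2)[OF R ut ln l0 U UU y hRv s0 ss1 x_def] .
  have xnz: "sqn x \<noteq> 0"
  proof
    assume "sqn x = 0"
    then have sy: "sqn y = 0" by (rule c2)
    have "c = 0\<^sub>v i"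
    proof (rule eq_vecI)
      fix j assume "j < dim_vec (0\<^sub>v i :: complex vec)"
      then have j: "j < i" by simp
      have "y $ j = 0" using sqn_zero[OF sy] y j ik kn by simp
      then show "c $ j = 0\<^sub>v i $ j" using yE[of j] j ik kn by simp
    qed (use c in simp)
    with c0 show False by simp
  qed
  define y' where "y' = mat_adjoint U2 *\<^sub>v x"
  have xc: "x \<in> carrier_vec k" unfolding x_def by simp
  have y': "y' \<in> carrier_vec k" unfolding y'_def using mult_mat_vec_carrier[OF adj_carrier[OF U2] xc] .
  have Tc: "T *\<^sub>v c = y'"
  proof -
    have A1: "mat_adjoint U2 * P \<in> carrier_mat k n" using mult_carrier_mat[OF adj_carrier[OF U2] P] .
    have A2: "mat_adjoint U2 * P * U \<in> carrier_mat k n" using mult_carrier_mat[OF A1 U] .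
    have "T *\<^sub>v c = (mat_adjoint U2 * P * U) *\<^sub>v y" unfolding T_def y_def
      by (rule assoc_mult_mat_vec[OF A2 E c])
    also have "\<dots> = (mat_adjoint U2 * P) *\<^sub>v (U *\<^sub>v y)" by (rule assoc_mult_mat_vec[OF A1 U y])
    also have "\<dots> = mat_adjoint U2 *\<^sub>v (P *\<^sub>v (U *\<^sub>v y))" by (rule assoc_mult_mat_vec[OF adj_carrier[OF U2] P Uy])
    finally show ?thesis unfolding y'_def xP .
  qed
  have y'z: "\<forall>j<i-1. y' $ j = 0"
  proof (intro allI impI)
    fix j assume j: "j < i - 1"
    have "(M *\<^sub>v c) $ j = (\<Sum>t<i. M $$ (j,t) * c $ t)" using mv_entry[OF M c] j by simp
    also have "\<dots> = (\<Sum>t<i. T $$ (j,t) * c $ t)" using j by (intro sum.cong) (auto simp: M_def)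
    also have "\<dots> = (T *\<^sub>v c) $ j" using mv_entry[OF T c] j ik by simp
    finally show "y' $ j = 0" using Mc Tc j by simp
  qed
  have xU2: "x = U2 *\<^sub>v y'" unfolding y'_def
    using assoc_mult_mat_vec[OF U2 adj_carrier[OF U2] xc] UU2' xc by simp
  have "(sigma i R22)^2 * sqn y' \<le> sqn (R22 *\<^sub>v (U2 *\<^sub>v y'))" using supU2 y' y'z by blast
  moreover have "sqn y' = sqn x" unfolding xU2 using sqn_unitary[OF U2 UU2 y'] by simp
  ultimately have "(sigma i R22)^2 * sqn x \<le> tau^2 * sqn x" using c1 xU2 by simp
  then have "(sigma i R22)^2 \<le> tau^2" using xnz sqn_nonneg[of x] by simp
  then have "sigma i R22 \<le> tau" using tau0 by (rule power2_le_imp_le)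
  then show ?thesis unfolding R22_def tau_def s1_def s_def l_def .
qed



lemma sv_cong: "mat_adjoint B * B = mat_adjoint B' * B' \<Longrightarrow> sigma j B = sigma j B'"
  unfolding sigma_def sing_vals_def by simp

lemma adj_QR: assumes Q: "(Q::complex mat) \<in> carrier_mat m n" and Qorth: "mat_adjoint Q * Q = 1\<^sub>m n"
  and R: "R \<in> carrier_mat n p"
  shows "mat_adjoint (Q * R) * (Q * R) = mat_adjoint R * R"
proof -
  have "mat_adjoint (Q * R) * (Q * R) = (mat_adjoint R * mat_adjoint Q) * (Q * R)"
    by (simp add: adj_mult[OF Q R])
  also have "\<dots> = mat_adjoint R * (mat_adjoint Q * (Q * R))"
    by (rule assoc_mult_mat[OF adj_carrier[OF R] adj_carrier[OF Q] mult_carrier_mat[OF Q R]])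
  also have "mat_adjoint Q * (Q * R) = (mat_adjoint Q * Q) * R"
    by (rule assoc_mult_mat[OF adj_carrier[OF Q] Q R, symmetric])
  also have "\<dots> = R" using Qorth R by simp
  finally show ?thesis .
qed

lemma submat_mult: assumes Q: "(Q::complex mat) \<in> carrier_mat m n" and R: "R \<in> carrier_mat n n"
  and l: "l \<le> n"
  shows "submat (Q * R) 0 0 m l = Q * submat R 0 0 n l"
proof (rule eq_matI)
  fix i j assume "i < dim_row (Q * submat R 0 0 n l)" "j < dim_col (Q * submat R 0 0 n l)"
  then have i: "i < m" and j: "j < l" using Q by auto
  have "col (submat R 0 0 n l) j = col R j" using R j l by (intro eq_vecI) auto
  then show "submat (Q * R) 0 0 m l $$ (i, j) = (Q * submat R 0 0 n l) $$ (i, j)"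
    using i j l Q R by simp
qed (use Q in auto)

theorem lemma3:
  fixes A Q R :: "complex mat" and m n k :: nat
  assumes A: "A \<in> carrier_mat m n" and mn: "n \<le> m"
    and Q: "Q \<in> carrier_mat m n" and Qorth: "mat_adjoint Q * Q = 1\<^sub>m n"
    and R: "R \<in> carrier_mat n n" and Rut: "upper_triangular R"
    and QR: "A = Q * R"
    and kn: "k < n"
    and gap: "\<forall>i\<in>{1..k}. sigma i A < sigma 1 (submat A 0 0 m (n - k))"
  shows "\<forall>i\<in>{1..k}. sigma i (submat R (n - k) (n - k) k k)
           \<le> (sigma n A / sigma 1 (submat A 0 0 m (n - k)) + 1) * sigma i A"
proof
  fix i assume i: "i \<in> {1..k}"
  have sA: "\<And>j. sigma j A = sigma j R" unfolding QR by (rule sv_cong, rule adj_QR[OF Q Qorth R])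
  have sA1: "sigma 1 (submat A 0 0 m (n - k)) = sigma 1 (submat R 0 0 n (n - k))"
  proof -
    have e: "submat A 0 0 m (n - k) = Q * submat R 0 0 n (n - k)"
      unfolding QR by (rule submat_mult[OF Q R]) simp
    have "mat_adjoint (Q * submat R 0 0 n (n - k)) * (Q * submat R 0 0 n (n - k)) =
      mat_adjoint (submat R 0 0 n (n - k)) * submat R 0 0 n (n - k)"
      by (rule adj_QR[OF Q Qorth submat_carrier])
    then show ?thesis unfolding e by (rule sv_cong)
  qed
  have g: "sigma i R < sigma 1 (submat R 0 0 n (n - k))" using gap i sA sA1 by simp
  show "sigma i (submat R (n - k) (n - k) k k)
           \<le> (sigma n A / sigma 1 (submat A 0 0 m (n - k)) + 1) * sigma i A"
    unfolding sA sA1 using main_R[OF R Rut kn _ _ g] i by simp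
qed


end
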